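(* Let $S$ be as in the context. Then $|\mathcal{T}_k(S)|\le|\mathcal{T}_{k+1}(S)|$ for all $1\le k<n$, and for all $1\le k\le k'<n$ the number $m_{k'}$ of edges of the edge-reduced de Bruijn graph $\tilde G_{k'}(S)$, counted with multiplicity, satisfies $m_{k'}\ge|\mathcal{T}_k(S)|$.
   Context: $\Sigma$ is a finite totally ordered alphabet containing a symbol $\$$ smaller than every other symbol. $S$ is a string of length $n\ge 2$ over $\Sigma$ whose last character is $\$$ and in which $\$$ occurs nowhere else. The rotations of $S$ are the $n$ strings $S[i..n]S[1..i-1]$, $i\in[1,n]$. The rotation-trie $\mathcal{T}(S)$ is the trie of the set of rotations of $S$; $\mathcal{T}_k(S)$ denotes its set of nodes at depth $k$ (equivalently, the set of distinct length-$k$ prefixes of rotations of $S$). For $1\le k\le n$ let $Z_k(S)=S[1..n]S[1..k]$. The order-$k$ de Bruijn graph $G_k(S)$ is the directed multigraph with node set $\{Z_k(S)[i..i+k-1]: i\in[1,n]\}$ that, for every $z\in\Sigma^{k+1}$ occurring exactly $m\ge1$ times as a substring of $Z_k(S)$, contains the edge $(z[1..k],z[2..k+1])$ with multiplicity $m$. $x$ is a predecessor of $y$ (and $y$ a successor of $x$) if there is an edge $(x,y)$ of positive multiplicity. An edge $(x,y)$ is fusible if $y$ is the only successor of $x$ and $x$ is the only predecessor of $y$. The edge-reduced de Bruijn graph $\tilde G_k(S)$ is obtained from $G_k(S)$ by setting the multiplicity of every fusible edge to $1$. *)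

theory Defs
  imports Main
begin

(* Strings are lists, positions are 0-based. *)

definition valid_text :: "'a::{linorder,finite} \<Rightarrow> 'a list \<Rightarrow> bool" where
  "valid_text d S \<longleftrightarrow> length S \<ge> 2 \<and> last S = d \<and> d \<notin> set (butlast S)
     \<and> (\<forall>c. c \<noteq> d \<longrightarrow> d < c)"

definition rotations :: "'a list \<Rightarrow> 'a list set" where
  "rotations S = {drop i S @ take i S | i. i < length S}"

(* T_k(S): nodes of the rotation trie at depth k = distinct length-k prefixes of rotations *)
definition trie_level :: "'a list \<Rightarrow> nat \<Rightarrow> 'a list set" where
  "trie_level S k = (\<lambda>r. take k r) ` rotations S"

definition Zk :: "'a list \<Rightarrow> nat \<Rightarrow> 'a list" where
  "Zk S k = S @ take k S"

definition dbg_nodes :: "'a list \<Rightarrow> nat \<Rightarrow> 'a list set" where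
  "dbg_nodes S k = {take k (drop i (Zk S k)) | i. i < length S}"

definition dbg_mult :: "'a list \<Rightarrow> nat \<Rightarrow> 'a list \<Rightarrow> 'a list \<Rightarrow> nat" where
  "dbg_mult S k x y = card {i. i + k + 1 \<le> length (Zk S k) \<and>
      take k (drop i (Zk S k)) = x \<and> take k (drop (Suc i) (Zk S k)) = y}"

definition dbg_succs :: "'a list \<Rightarrow> nat \<Rightarrow> 'a list \<Rightarrow> 'a list set" where
  "dbg_succs S k x = {y. dbg_mult S k x y > 0}"

definition dbg_preds :: "'a list \<Rightarrow> nat \<Rightarrow> 'a list \<Rightarrow> 'a list set" where
  "dbg_preds S k y = {x. dbg_mult S k x y > 0}"

definition fusible :: "'a list \<Rightarrow> nat \<Rightarrow> 'a list \<Rightarrow> 'a list \<Rightarrow> bool" where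
  "fusible S k x y \<longleftrightarrow> dbg_succs S k x = {y} \<and> dbg_preds S k y = {x}"

definition red_mult :: "'a list \<Rightarrow> nat \<Rightarrow> 'a list \<Rightarrow> 'a list \<Rightarrow> nat" where
  "red_mult S k x y = (if fusible S k x y then 1 else dbg_mult S k x y)"

definition red_edge_count :: "'a list \<Rightarrow> nat \<Rightarrow> nat" where
  "red_edge_count S k = (\<Sum>(x,y) \<in> dbg_nodes S k \<times> dbg_nodes S k. red_mult S k x y)"

end

theory Submission
  imports Defs
begin

lemma trie_mono: "card (trie_level S k) \<le> card (trie_level S (Suc k))"
proof -
  have "trie_level S k = take k ` trie_level S (Suc k)"
    unfolding trie_level_def image_image by (simp add: min_def)
  moreover have "finite (trie_level S (Suc k))"
    unfolding trie_level_def rotations_def by simp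
  ultimately show ?thesis by (simp add: card_image_le)
qed

lemma trie_mono2: "k \<le> k' \<Longrightarrow> card (trie_level S k) \<le> card (trie_level S k')"
proof (induction k' rule: dec_induct)
  case base then show ?case by simp
next
  case (step m) then show ?case using trie_mono[of S m] by linarith
qed

lemma take_rot: "i < length S \<Longrightarrow> k < length S \<Longrightarrow>
   take k (drop i S @ take i S) = take k (drop i (S @ take k S))"
proof -
  assume a: "i < length S" "k < length S"
  have m1: "min (k - (length S - i)) i = k - (length S - i)"
       "min (k - (length S - i)) k = k - (length S - i)" using a by linarith+
  have d: "drop i (S @ take k S) = drop i S @ take k S" using a by simp
  have "take k (drop i (S @ take k S)) = take k (drop i S) @ take (k - (length S - i)) (take k S)"
    by (simp only: d take_append length_drop)
  also have "\<dots> = take k (drop i S) @ take (k - (length S - i)) S"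
    by (simp only: take_take m1)
  also have "\<dots> = take k (drop i S) @ take (k - (length S - i)) (take i S)"
    by (simp only: take_take m1)
  also have "\<dots> = take k (drop i S @ take i S)"
    by (simp only: take_append length_drop)
  finally show ?thesis by (rule sym)
qed

lemma nodes_eq: "k < length S \<Longrightarrow> dbg_nodes S k = trie_level S k"
proof -
  assume k: "k < length S"
  have "dbg_nodes S k = (\<lambda>i. take k (drop i (S @ take k S))) ` {..<length S}"
    unfolding dbg_nodes_def Zk_def image_def lessThan_iff by blast
  also have "\<dots> = (\<lambda>i. take k (drop i S @ take i S)) ` {..<length S}"
    by (rule image_cong, rule refl, rule take_rot[OF _ k, symmetric], simp)
  also have "\<dots> = trie_level S k"
    unfolding trie_level_def rotations_def image_def lessThan_iff by blast
  finally show ?thesis .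
qed

lemma nodes_fin: "finite (dbg_nodes S k)"
  unfolding dbg_nodes_def by simp

lemma succ_exists:
  assumes "k < length S" "x \<in> dbg_nodes S k"
  shows "\<exists>y \<in> dbg_nodes S k. dbg_mult S k x y > 0"
proof -
  obtain i where i: "i < length S" "x = take k (drop i (Zk S k))"
    using assms(2) unfolding dbg_nodes_def by blast
  define y where "y = take k (drop (Suc i) (Zk S k))"
  have "y \<in> dbg_nodes S k"
  proof (cases "Suc i < length S")
    case True
    have "y = take k (drop (Suc i) (Zk S k))" by (rule y_def)
    then show ?thesis unfolding dbg_nodes_def using True by blast
  next
    case False
    then have "Suc i = length S" using i(1) by linarith
    have "drop (length S) (S @ take k S) = take k S" by simp
    then have "drop (Suc i) (Zk S k) = take k S"
      unfolding Zk_def using \<open>Suc i = length S\<close> by simp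
    then have "y = take k (take k S)" unfolding y_def by simp
    also have "\<dots> = take k (drop 0 (Zk S k))" unfolding Zk_def using assms(1) by simp
    finally have "y = take k (drop 0 (Zk S k))" .
    moreover have "(0::nat) < length S" using i(1) by linarith
    ultimately show ?thesis unfolding dbg_nodes_def by blast
  qed
  moreover have "dbg_mult S k x y > 0"
  proof -
    let ?A = "{i. i + k + 1 \<le> length (Zk S k) \<and>
      take k (drop i (Zk S k)) = x \<and> take k (drop (Suc i) (Zk S k)) = y}"
    have "?A \<subseteq> {..length (Zk S k)}" by auto
    then have "finite ?A" by (rule finite_subset) simp
    have "i + k + 1 \<le> length (Zk S k)" using i(1) unfolding Zk_def using assms(1) by simp
    then have "i \<in> ?A" using i(2) unfolding y_def by blast
    with \<open>finite ?A\<close> have "card ?A > 0" using card_gt_0_iff by blast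
    then show ?thesis unfolding dbg_mult_def .
  qed
  ultimately show ?thesis by blast
qed

lemma edges_bound:
  assumes "k < length S"
  shows "card (dbg_nodes S k) \<le> red_edge_count S k"
proof -
  let ?N = "dbg_nodes S k"
  define g where "g x = (SOME y. y \<in> ?N \<and> dbg_mult S k x y > 0)" for x
  have g: "g x \<in> ?N \<and> dbg_mult S k x (g x) > 0" if xN: "x \<in> ?N" for x
  proof -
    obtain y where "y \<in> ?N \<and> dbg_mult S k x y > 0" using succ_exists[OF assms xN] by blast
    then show ?thesis unfolding g_def by (rule someI)
  qed
  define f where "f x = (x, g x)" for x
  have inj: "inj_on f ?N" unfolding f_def inj_on_def by simp
  have sub: "f ` ?N \<subseteq> ?N \<times> ?N" using g unfolding f_def by auto
  have "card ?N = card (f ` ?N)" using card_image[OF inj] by simp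
  also have "\<dots> = (\<Sum>p \<in> f ` ?N. 1)" by simp
  also have "\<dots> \<le> (\<Sum>(x,y) \<in> f ` ?N. red_mult S k x y)"
  proof (rule sum_mono)
    fix p assume "p \<in> f ` ?N"
    then obtain x where "x \<in> ?N" "p = (x, g x)" unfolding f_def by auto
    then show "1 \<le> (case p of (x,y) \<Rightarrow> red_mult S k x y)"
      using g[of x] unfolding red_mult_def by auto
  qed
  also have "\<dots> \<le> (\<Sum>(x,y) \<in> ?N \<times> ?N. red_mult S k x y)"
    by (rule sum_mono2) (use sub nodes_fin[of S k] in auto)
  finally show ?thesis unfolding red_edge_count_def .
qed

theorem mainTheorem6:
  fixes S :: "'a::{linorder,finite} list" and d :: 'a
  assumes "valid_text d S"
  shows "(\<forall>k. 1 \<le> k \<and> k < length S \<longrightarrow>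
            card (trie_level S k) \<le> card (trie_level S (Suc k)))
       \<and> (\<forall>k k'. 1 \<le> k \<and> k \<le> k' \<and> k' < length S \<longrightarrow>
            card (trie_level S k) \<le> red_edge_count S k')"
proof (intro conjI allI impI)
  fix k show "card (trie_level S k) \<le> card (trie_level S (Suc k))" by (rule trie_mono)
next
  fix k k' assume h: "1 \<le> k \<and> k \<le> k' \<and> k' < length S"
  have "card (trie_level S k) \<le> card (trie_level S k')" using h trie_mono2 by blast
  also have "\<dots> = card (dbg_nodes S k')" using nodes_eq[of k' S] h by simp
  also have "\<dots> \<le> red_edge_count S k'" using edges_bound h by blast
  finally show "card (trie_level S k) \<le> red_edge_count S k'" .
qed

end
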